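(* Let $\mathbb{T}\subseteq\mathbb{R}$ be a nonempty closed set that is bounded above or bounded below. Then there is no càdlàg $\mathbb{T}$-valued process $(\xi_t)_{t\ge0}$ with deterministic initial value $\xi_0=x\in\mathbb{T}$ satisfying all three conditions (I'), (II) and (III).
   Context: Conditions on a $\mathbb{T}$-valued càdlàg process $(\xi_t)_{t\ge0}$: (I') for all $x<y<z$ in $\mathbb{T}$ and $0\le r<t$, if $(\xi_r,\xi_t)=(x,z)$ or $(\xi_r,\xi_t)=(z,x)$ then $\xi_s=y$ for some $s\in[r,t]$; (II) $(\xi_t)$ is a martingale; (III) $(\xi_t^2-t)$ is a martingale. *)

theory Defs
  imports "HOL-Probability.Probability"
begin

definition cadlag :: "(real \<Rightarrow> real) \<Rightarrow> bool" where
  "cadlag f \<longleftrightarrow> (\<forall>t\<ge>0. continuous (at_right t) f) \<and>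
                 (\<forall>t>0. \<exists>l. (f \<longlongrightarrow> l) (at_left t))"

definition filtration_on :: "'a measure \<Rightarrow> (real \<Rightarrow> 'a measure) \<Rightarrow> bool" where
  "filtration_on M F \<longleftrightarrow> (\<forall>t\<ge>0. subalgebra M (F t)) \<and>
     (\<forall>s t. 0 \<le> s \<and> s \<le> t \<longrightarrow> sets (F s) \<subseteq> sets (F t))"

definition martingale :: "'a measure \<Rightarrow> (real \<Rightarrow> 'a measure) \<Rightarrow> (real \<Rightarrow> 'a \<Rightarrow> real) \<Rightarrow> bool" where
  "martingale M F X \<longleftrightarrow>
     (\<forall>t\<ge>0. X t \<in> borel_measurable (F t) \<and> integrable M (X t)) \<and>
     (\<forall>s t. 0 \<le> s \<and> s \<le> t \<longrightarrow> (AE \<omega> in M. real_cond_exp M (F s) (X t) \<omega> = X s \<omega>))"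

definition condition_I' :: "real set \<Rightarrow> (real \<Rightarrow> real) \<Rightarrow> bool" where
  "condition_I' T p \<longleftrightarrow>
     (\<forall>x\<in>T. \<forall>y\<in>T. \<forall>z\<in>T. \<forall>r t. x < y \<and> y < z \<and> 0 \<le> r \<and> r < t \<and>
        ((p r, p t) = (x, z) \<or> (p r, p t) = (z, x)) \<longrightarrow> (\<exists>s\<in>{r..t}. p s = y))"

end

theory Submission
  imports Defs
begin

definition mprop :: "'a measure \<Rightarrow> (real \<Rightarrow> 'a measure) \<Rightarrow> (real \<Rightarrow> 'a \<Rightarrow> real) \<Rightarrow> bool" where
  "mprop M F X \<longleftrightarrow> (\<forall>s t A. 0 \<le> s \<and> s \<le> t \<and> A \<in> sets (F s) \<longrightarrow>
     (\<integral>\<omega>. X t \<omega> * indicator A \<omega> \<partial>M) = (\<integral>\<omega>. X s \<omega> * indicator A \<omega> \<partial>M))"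

lemma mprop_of_martingale:
  assumes P: "prob_space M" and Fi: "filtration_on M F" and Ma: "martingale M F X"
  shows "mprop M F X"
  unfolding mprop_def
proof (intro allI impI)
  fix s t A assume h: "0 \<le> s \<and> s \<le> t \<and> A \<in> sets (F s)"
  have sub: "subalgebra M (F s)" using Fi h unfolding filtration_on_def by auto
  interpret fs: finite_measure_subalgebra M "F s"
    using P sub by (simp add: finite_measure_subalgebra_def finite_measure_subalgebra_axioms_def prob_space.finite_measure)
  have it: "integrable M (X t)" and ms: "X s \<in> borel_measurable (F s)"
    using Ma h unfolding martingale_def by auto
  have ae: "AE \<omega> in M. real_cond_exp M (F s) (X t) \<omega> = X s \<omega>" using Ma h unfolding martingale_def by auto
  have "(\<integral>\<omega>\<in>A. X t \<omega> \<partial>M) = (\<integral>\<omega>\<in>A. real_cond_exp M (F s) (X t) \<omega> \<partial>M)"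
    using fs.real_cond_exp_intA[OF it] h by auto
  also have "\<dots> = (\<integral>\<omega>\<in>A. X s \<omega> \<partial>M)"
    unfolding set_lebesgue_integral_def
  proof (rule integral_cong_AE)
    have [measurable]: "X s \<in> borel_measurable M" using measurable_from_subalg[OF sub ms] .
    have [measurable]: "A \<in> sets M" using h sub by (auto simp: subalgebra_def)
    show "(\<lambda>x. indicator A x *\<^sub>R real_cond_exp M (F s) (X t) x) \<in> borel_measurable M" by measurable
    show "(\<lambda>x. indicator A x *\<^sub>R X s x) \<in> borel_measurable M" by measurable
    show "AE x in M. indicator A x *\<^sub>R real_cond_exp M (F s) (X t) x = indicator A x *\<^sub>R X s x"
      using ae by auto
  qed
  finally show "(\<integral>\<omega>. X t \<omega> * indicator A \<omega> \<partial>M) = (\<integral>\<omega>. X s \<omega> * indicator A \<omega> \<partial>M)"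
    unfolding set_lebesgue_integral_def by (simp add: mult.commute)
qed

lemma sum_ind_pick:
  fixes f :: "nat \<Rightarrow> real"
  assumes "\<omega> \<in> space M" "\<kappa> \<omega> \<le> L"
  shows "(\<Sum>k\<le>L. f k * indicator (A \<inter> {\<omega>\<in>space M. \<kappa> \<omega> = k}) \<omega>) = f (\<kappa> \<omega>) * indicator A \<omega>"
proof -
  have "\<And>k. f k * indicator (A \<inter> {\<omega>\<in>space M. \<kappa> \<omega> = k}) \<omega> = (if k = \<kappa> \<omega> then f k * indicator A \<omega> else 0)"
    using assms by (auto simp: indicator_def)
  then show ?thesis using assms by (simp add: sum.delta')
qed

lemma stopped_integrable:
  fixes Y :: "nat \<Rightarrow> 'a \<Rightarrow> real" and \<kappa> :: "'a \<Rightarrow> nat"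
  assumes "\<forall>\<omega>\<in>space M. \<kappa> \<omega> \<le> L" "\<forall>k\<le>L. {\<omega>\<in>space M. \<kappa> \<omega> = k} \<in> sets M"
    "\<forall>k\<le>L. integrable M (Y k)"
  shows "integrable M (\<lambda>\<omega>. Y (\<kappa> \<omega>) \<omega>)"
proof -
  have "integrable M (\<lambda>\<omega>. \<Sum>k\<le>L. Y k \<omega> * indicator (space M \<inter> {\<omega>\<in>space M. \<kappa> \<omega> = k}) \<omega>)"
  proof (rule Bochner_Integration.integrable_sum)
    fix k assume "k \<in> {..L}"
    then show "integrable M (\<lambda>\<omega>. Y k \<omega> * indicator (space M \<inter> {\<omega>\<in>space M. \<kappa> \<omega> = k}) \<omega>)"
      using assms by (intro integrable_real_mult_indicator) auto
  qed
  moreover have "\<And>\<omega>. \<omega> \<in> space M \<Longrightarrow> (\<Sum>k\<le>L. Y k \<omega> * indicator (space M \<inter> {\<omega>\<in>space M. \<kappa> \<omega> = k}) \<omega>) = Y (\<kappa> \<omega>) \<omega>"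
  proof -
    fix \<omega> assume w: "\<omega> \<in> space M"
    have "(\<Sum>k\<le>L. Y k \<omega> * indicator (space M \<inter> {\<omega>\<in>space M. \<kappa> \<omega> = k}) \<omega>) = Y (\<kappa> \<omega>) \<omega> * indicator (space M) \<omega>"
      by (rule sum_ind_pick) (use w assms in auto)
    then show "(\<Sum>k\<le>L. Y k \<omega> * indicator (space M \<inter> {\<omega>\<in>space M. \<kappa> \<omega> = k}) \<omega>) = Y (\<kappa> \<omega>) \<omega>"
      using w by simp
  qed
  ultimately show ?thesis
    using Bochner_Integration.integrable_cong[of M M] by (smt (verit))
qed

lemma OS:
  fixes X :: "real \<Rightarrow> 'a \<Rightarrow> real" and \<kappa> :: "'a \<Rightarrow> nat"
  assumes mp: "mprop M F X"
    and k: "\<forall>\<omega>\<in>space M. \<kappa> \<omega> \<le> L"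
    and t: "\<forall>k\<le>L. 0 \<le> t k \<and> t k \<le> N"
    and AF: "\<forall>k\<le>L. A \<inter> {\<omega>\<in>space M. \<kappa> \<omega> = k} \<in> sets (F (t k))"
    and AM: "\<forall>k\<le>L. A \<inter> {\<omega>\<in>space M. \<kappa> \<omega> = k} \<in> sets M"
    and iN: "integrable M (X N)" and ik: "\<forall>k\<le>L. integrable M (X (t k))"
  shows "(\<integral>\<omega>. X N \<omega> * indicator A \<omega> \<partial>M) = (\<integral>\<omega>. X (t (\<kappa> \<omega>)) \<omega> * indicator A \<omega> \<partial>M)"
proof -
  let ?E = "\<lambda>k. A \<inter> {\<omega>\<in>space M. \<kappa> \<omega> = k}"
  have "(\<integral>\<omega>. X N \<omega> * indicator A \<omega> \<partial>M) = (\<integral>\<omega>. (\<Sum>k\<le>L. X N \<omega> * indicator (?E k) \<omega>) \<partial>M)"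
  proof (rule Bochner_Integration.integral_cong)
    fix \<omega> assume "\<omega> \<in> space M"
    then show "X N \<omega> * indicator A \<omega> = (\<Sum>k\<le>L. X N \<omega> * indicator (?E k) \<omega>)"
      by (rule sum_ind_pick[symmetric]) (use k \<open>\<omega> \<in> space M\<close> in auto)
  qed simp
  also have "\<dots> = (\<Sum>k\<le>L. (\<integral>\<omega>. X N \<omega> * indicator (?E k) \<omega> \<partial>M))"
    by (rule Bochner_Integration.integral_sum) (use AM iN in \<open>auto intro!: integrable_real_mult_indicator\<close>)
  also have "\<dots> = (\<Sum>k\<le>L. (\<integral>\<omega>. X (t k) \<omega> * indicator (?E k) \<omega> \<partial>M))"
    by (rule sum.cong) (use mp t AF in \<open>auto simp: mprop_def\<close>)
  also have "\<dots> = (\<integral>\<omega>. (\<Sum>k\<le>L. X (t k) \<omega> * indicator (?E k) \<omega>) \<partial>M)"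
    by (rule Bochner_Integration.integral_sum[symmetric]) (use AM ik in \<open>auto intro!: integrable_real_mult_indicator\<close>)
  also have "\<dots> = (\<integral>\<omega>. X (t (\<kappa> \<omega>)) \<omega> * indicator A \<omega> \<partial>M)"
  proof (rule Bochner_Integration.integral_cong)
    fix \<omega> assume "\<omega> \<in> space M"
    then show "(\<Sum>k\<le>L. X (t k) \<omega> * indicator (?E k) \<omega>) = X (t (\<kappa> \<omega>)) \<omega> * indicator A \<omega>"
      by (rule sum_ind_pick) (use k \<open>\<omega> \<in> space M\<close> in auto)
  qed simp
  finally show ?thesis .
qed

lemma rc_lt:
  fixes p :: "real \<Rightarrow> real"
  assumes "continuous (at_right t) p" "p t < c"
  shows "\<exists>d>0. \<forall>u. t \<le> u \<and> u < t + d \<longrightarrow> p u < c"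
proof -
  have "(p \<longlongrightarrow> p t) (at_right t)" using assms(1) by (simp add: continuous_within)
  then have "eventually (\<lambda>u. p u < c) (at_right t)" using assms(2) by (rule order_tendstoD)
  then obtain b where b: "b > t" "\<forall>y>t. y < b \<longrightarrow> p y < c" by (auto simp: eventually_at_right_field)
  show ?thesis
    by (rule exI[of _ "b - t"]) (use b assms(2) in \<open>auto simp: le_less\<close>)
qed

lemma rc_gt:
  fixes p :: "real \<Rightarrow> real"
  assumes "continuous (at_right t) p" "c < p t"
  shows "\<exists>d>0. \<forall>u. t \<le> u \<and> u < t + d \<longrightarrow> c < p u"
proof -
  have "(p \<longlongrightarrow> p t) (at_right t)" using assms(1) by (simp add: continuous_within)
  then have "eventually (\<lambda>u. c < p u) (at_right t)" using assms(2) by (rule order_tendstoD)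
  then obtain b where b: "b > t" "\<forall>y>t. y < b \<longrightarrow> c < p y" by (auto simp: eventually_at_right_field)
  show ?thesis
    by (rule exI[of _ "b - t"]) (use b assms(2) in \<open>auto simp: le_less\<close>)
qed

lemma path_lemma:
  fixes p :: "real \<Rightarrow> real" and N :: nat
  assumes p0: "p 0 = x" and xb: "x < b" and pT: "\<forall>t\<ge>0. p t \<in> T"
    and rc: "\<forall>t\<ge>0. continuous (at_right t) p" and I: "condition_I' T p"
    and Kb: "b \<le> K" and Kp: "\<forall>z\<in>T. K < z \<longrightarrow> (\<exists>y\<in>T. b < y \<and> y < z)"
  shows "\<exists>n0. \<forall>n\<ge>n0. p (real (LEAST k. N*2^n \<le> k \<or> b < p (real k / 2^n)) / 2^n) \<le> K + 1"
proof -
  define \<kappa> where "\<kappa> n = (LEAST k. N*2^n \<le> k \<or> b < p (real k / 2^n))" for n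
  define \<tau> where "\<tau> n = real (\<kappa> n) / 2^n" for n
  have kP: "N*2^n \<le> \<kappa> n \<or> b < p (\<tau> n)" for n
    unfolding \<kappa>_def \<tau>_def by (rule LeastI[of _ "N*2^n"]) simp
  have kL: "\<kappa> n \<le> N*2^n" for n
    unfolding \<kappa>_def by (rule Least_le) simp
  have t0: "0 \<le> \<tau> n" for n unfolding \<tau>_def by simp
  have tN: "\<tau> n \<le> N" for n
  proof -
    have "real (\<kappa> n) \<le> real N * 2^n" using kL[of n] by (metis of_nat_le_iff of_nat_mult of_nat_numeral of_nat_power)
    then show ?thesis unfolding \<tau>_def by (simp add: divide_le_eq)
  qed
  have tNeq: "\<tau> n = N" if "N*2^n \<le> \<kappa> n" for n
  proof -
    have "\<kappa> n = N*2^n" using that kL[of n] by simp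
    then show ?thesis unfolding \<tau>_def by simp
  qed
  show ?thesis
  proof (cases "\<exists>t\<in>{0..real N}. b < p t")
    case False
    have "p (\<tau> n) \<le> K + 1" for n using False t0[of n] tN[of n] Kb by force
    then show ?thesis unfolding \<tau>_def \<kappa>_def by blast
  next
    case True
    define S where "S = {t\<in>{0..real N}. b < p t}"
    define \<sigma> where "\<sigma> = Inf S"
    have Sne: "S \<noteq> {}" using True S_def by auto
    have Sbd: "bdd_below S" unfolding S_def by (rule bdd_belowI[of _ 0]) auto
    have sig_le: "\<sigma> \<le> s" if "s \<in> S" for s unfolding \<sigma>_def by (rule cInf_lower[OF that Sbd])
    obtain d0 where d0: "d0 > 0" "\<forall>u. 0 \<le> u \<and> u < 0 + d0 \<longrightarrow> p u < b"
      using rc_lt[of 0 p b] rc p0 xb by auto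
    have sig_ge: "d0 \<le> \<sigma>" unfolding \<sigma>_def
    proof (rule cInf_greatest[OF Sne])
      fix s assume "s \<in> S"
      then show "d0 \<le> s" using d0 unfolding S_def by force
    qed
    have sig_N: "\<sigma> \<le> N" using Sne sig_le S_def by force
    have sigK: "p \<sigma> \<le> K"
    proof (rule ccontr)
      assume "\<not> p \<sigma> \<le> K"
      moreover have "p \<sigma> \<in> T" using pT sig_ge d0 by auto
      ultimately obtain y where y: "y \<in> T" "b < y" "y < p \<sigma>" using Kp by force
      have xT: "x \<in> T" using pT p0 by force
      have "\<exists>s\<in>{0..\<sigma>}. p s = y"
      proof -
        have "x < y" "y < p \<sigma>" "0 < \<sigma>" using xb y sig_ge d0 by auto
        have "\<forall>x\<in>T. \<forall>y\<in>T. \<forall>z\<in>T. \<forall>r t. x < y \<and> y < z \<and> 0 \<le> r \<and> r < t \<and>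
          ((p r, p t) = (x, z) \<or> (p r, p t) = (z, x)) \<longrightarrow> (\<exists>s\<in>{r..t}. p s = y)"
          using I unfolding condition_I'_def .
        then have "x < y \<and> y < p \<sigma> \<and> (0::real) \<le> 0 \<and> 0 < \<sigma> \<and>
          ((p 0, p \<sigma>) = (x, p \<sigma>) \<or> (p 0, p \<sigma>) = (p \<sigma>, x)) \<longrightarrow> (\<exists>s\<in>{0..\<sigma>}. p s = y)"
          using xT y(1) \<open>p \<sigma> \<in> T\<close> by blast
        then show ?thesis using \<open>x < y\<close> \<open>y < p \<sigma>\<close> \<open>0 < \<sigma>\<close> p0 by simp
      qed
      then obtain s where s: "s \<in> {0..\<sigma>}" "p s = y" by blast
      then have "s \<in> S" using y sig_N unfolding S_def by auto
      then have "s = \<sigma>" using sig_le s by force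
      then show False using s y by simp
    qed
    obtain e where e: "e > 0" "\<forall>u. \<sigma> \<le> u \<and> u < \<sigma> + e \<longrightarrow> p u < K + 1"
      using rc_lt[of \<sigma> p "K+1"] rc sigK sig_ge d0 by auto
    have tau_ge: "\<sigma> \<le> \<tau> n" for n
    proof (cases "N*2^n \<le> \<kappa> n")
      case True then show ?thesis using tNeq sig_N by simp
    next
      case False
      then have "\<tau> n \<in> S" using kP[of n] t0 tN unfolding S_def by auto
      then show ?thesis by (rule sig_le)
    qed
    show ?thesis
    proof (cases "real N < \<sigma> + e")
      case True
      have "p (\<tau> n) \<le> K + 1" for n using e tau_ge[of n] tN[of n] True by force
      then show ?thesis unfolding \<tau>_def \<kappa>_def by blast
    next
      case False
      have "\<sigma> < \<sigma> + e/2" using e by simp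
      then obtain t1 where t1: "t1 \<in> S" "t1 < \<sigma> + e/2"
        using cInf_lessD[OF Sne] unfolding \<sigma>_def by blast
      have t1s: "\<sigma> \<le> t1" using sig_le t1 by simp
      obtain d where d: "d > 0" "\<forall>u. t1 \<le> u \<and> u < t1 + d \<longrightarrow> b < p u"
        using rc_gt[of t1 p b] rc t1 unfolding S_def by auto
      define \<delta> where "\<delta> = min d (\<sigma> + e - t1)"
      have dpos: "\<delta> > 0" unfolding \<delta>_def using d t1 e by simp
      obtain n0 where n0: "(1/2::real)^n0 < \<delta>" using real_arch_pow_inv[OF dpos, of "1/2"] by auto
      have "p (\<tau> n) \<le> K + 1" if nn: "n \<ge> n0" for n
      proof -
        define k where "k = nat \<lceil>t1 * 2^n\<rceil>"
        have t1pos: "0 \<le> t1" using t1 unfolding S_def by auto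
        have kge: "t1 * 2^n \<le> real k" unfolding k_def by linarith
        have klt: "real k < t1 * 2^n + 1"
        proof -
          have "0 \<le> t1 * 2^n" using t1pos by simp
          then have "real k = of_int \<lceil>t1 * 2^n\<rceil>" unfolding k_def by simp
          then show ?thesis using ceiling_correct[of "t1 * 2^n"] by linarith
        qed
        define g where "g = real k / 2^n"
        have g1: "t1 \<le> g" unfolding g_def using kge by (simp add: le_divide_eq)
        have "(1/2::real)^n \<le> (1/2)^n0" using nn by (simp add: power_decreasing)
        then have hn: "1 / 2^n < \<delta>" using n0 by (simp add: power_one_over)
        have "g < t1 + 1/2^n"
        proof -
          have "real k / 2^n < (t1 * 2^n + 1) / 2^n" using klt by (simp add: divide_strict_right_mono)
          also have "\<dots> = t1 + 1/2^n" by (simp add: field_simps)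
          finally show ?thesis unfolding g_def .
        qed
        then have g2: "g < t1 + \<delta>" using hn by linarith
        then have gp: "b < p g" using d g1 unfolding \<delta>_def by auto
        have gN: "g < real N" using g2 False unfolding \<delta>_def by linarith
        have "real k < real N * 2^n" using gN unfolding g_def by (simp add: divide_less_eq)
        then have "k < N * 2^n" by (metis of_nat_less_iff of_nat_mult of_nat_numeral of_nat_power)
        have "\<kappa> n \<le> k" unfolding \<kappa>_def by (rule Least_le) (use gp g_def in auto)
        then have "\<tau> n \<le> g" unfolding \<tau>_def g_def by (simp add: divide_right_mono)
        then have "\<tau> n < \<sigma> + e" using g2 unfolding \<delta>_def by linarith
        then show ?thesis using e tau_ge[of n] by force
      qed
      then show ?thesis unfolding \<tau>_def \<kappa>_def by blast
    qed
  qed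
qed

lemma least_eq_iff_nat:
  fixes P :: "nat \<Rightarrow> bool"
  assumes "P L"
  shows "(LEAST k. P k) = k \<longleftrightarrow> P k \<and> (\<forall>j<k. \<not> P j)"
proof
  assume h: "(LEAST k. P k) = k"
  show "P k \<and> (\<forall>j<k. \<not> P j)" using LeastI[of P L, OF assms] not_less_Least[of _ P] h by auto
next
  assume h: "P k \<and> (\<forall>j<k. \<not> P j)"
  show "(LEAST k. P k) = k" by (rule Least_equality) (use h not_less in auto)
qed

lemma sq_bound: fixes y m c :: real assumes "m \<le> y" "y \<le> c" shows "y\<^sup>2 \<le> max (m\<^sup>2) (c\<^sup>2)"
proof (cases "0 \<le> y")
  case True
  then have "y\<^sup>2 \<le> c\<^sup>2" using assms by (intro power_mono) auto
  then show ?thesis by simp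
next
  case False
  then have "(-y)\<^sup>2 \<le> (-m)\<^sup>2" using assms by (intro power_mono) auto
  then show ?thesis by simp
qed

lemma core:
  fixes M :: "'a measure" and F :: "real \<Rightarrow> 'a measure" and T :: "real set"
    and m x :: real and \<xi> :: "real \<Rightarrow> 'a \<Rightarrow> real"
  assumes P: "prob_space M" and Fi: "filtration_on M F"
    and mT: "\<forall>y\<in>T. m \<le> y" and xT: "x \<in> T"
    and vals: "\<forall>\<omega>\<in>space M. \<forall>t\<ge>0. \<xi> t \<omega> \<in> T"
    and init: "\<forall>\<omega>\<in>space M. \<xi> 0 \<omega> = x"
    and rc: "\<forall>\<omega>\<in>space M. \<forall>t\<ge>0. continuous (at_right t) (\<lambda>t. \<xi> t \<omega>)"
    and I: "\<forall>\<omega>\<in>space M. condition_I' T (\<lambda>t. \<xi> t \<omega>)"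
    and adp: "\<forall>t\<ge>0. \<xi> t \<in> borel_measurable (F t)"
    and int1: "\<forall>t\<ge>0. integrable M (\<xi> t)"
    and int2: "\<forall>t\<ge>0. integrable M (\<lambda>\<omega>. (\<xi> t \<omega>)\<^sup>2)"
    and mp1: "mprop M F \<xi>" and mp2: "mprop M F (\<lambda>t \<omega>. (\<xi> t \<omega>)\<^sup>2 - t)"
  shows False
proof -
  interpret prob_space M by (rule P)
  have subF: "subalgebra M (F t)" if "t \<ge> 0" for t using Fi that unfolding filtration_on_def by auto
  have spF: "space (F t) = space M" if "t \<ge> 0" for t using subF[OF that] unfolding subalgebra_def by auto
  have setsF: "sets (F t) \<subseteq> sets M" if "t \<ge> 0" for t using subF[OF that] unfolding subalgebra_def by auto
  have adp2: "\<xi> u \<in> borel_measurable (F s)" if "0 \<le> u" "u \<le> s" for u s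
  proof (rule measurable_from_subalg[of "F s" "F u"])
    show "subalgebra (F s) (F u)" unfolding subalgebra_def
      using Fi that spF[of u] spF[of s] unfolding filtration_on_def by auto
    show "\<xi> u \<in> borel_measurable (F u)" using adp that by auto
  qed
  have measM: "\<xi> t \<in> borel_measurable M" if "t \<ge> 0" for t
    using int1 that by auto
  define b where "b = x + 1"
  have mx: "m \<le> x" using mT xT by auto
  define K where "K = (if \<exists>y\<in>T. b < y then SOME y. y \<in> T \<and> b < y else b)"
  have Kb: "b \<le> K" and Kp: "\<forall>z\<in>T. K < z \<longrightarrow> (\<exists>y\<in>T. b < y \<and> y < z)"
  proof -
    show "b \<le> K"
    proof (cases "\<exists>y\<in>T. b < y")
      case True
      then have "K \<in> T \<and> b < K" unfolding K_def using someI_ex[of "\<lambda>y. y \<in> T \<and> b < y"] by auto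
      then show ?thesis by simp
    qed (simp add: K_def)
    show "\<forall>z\<in>T. K < z \<longrightarrow> (\<exists>y\<in>T. b < y \<and> y < z)"
    proof (cases "\<exists>y\<in>T. b < y")
      case True
      then have "K \<in> T \<and> b < K" unfolding K_def using someI_ex[of "\<lambda>y. y \<in> T \<and> b < y"] by auto
      then show ?thesis by auto
    next
      case False then show ?thesis unfolding K_def by auto
    qed
  qed
  define C where "C = max (m\<^sup>2) ((K+1)\<^sup>2)"
  define p0 where "p0 = 1 / (b - m)"
  have bm: "b - m \<ge> 1" using mx b_def by simp
  have p0pos: "p0 > 0" unfolding p0_def using bm by simp
  obtain N :: nat where N: "(C + 1) / p0 < real N" using reals_Archimedean2 by blast
  have Np0: "C + 1 < real N * p0" using N p0pos by (simp add: divide_less_eq)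
  define tt where "tt n k = real k / 2^n" for n :: nat and k :: nat
  define \<kappa> where "\<kappa> n \<omega> = (LEAST k. N*2^n \<le> k \<or> b < \<xi> (tt n k) \<omega>)" for n \<omega>
  define A where "A n = {\<omega>\<in>space M. K + 1 < \<xi> (tt n (\<kappa> n \<omega>)) \<omega>}" for n
  define eps where "eps n = (\<integral>\<omega>. (\<xi> N \<omega>)\<^sup>2 * indicator (A n) \<omega> \<partial>M)" for n
  have kL: "\<kappa> n \<omega> \<le> N*2^n" for n \<omega>
    unfolding \<kappa>_def by (rule Least_le) simp
  have kP: "N*2^n \<le> \<kappa> n \<omega> \<or> b < \<xi> (tt n (\<kappa> n \<omega>)) \<omega>" for n \<omega>
    unfolding \<kappa>_def by (rule LeastI[of _ "N*2^n"]) simp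
  have tt0: "0 \<le> tt n k" for n k unfolding tt_def by simp
  have ttN: "tt n k \<le> N" if "k \<le> N*2^n" for n k
  proof -
    have "real k \<le> real (N * 2^n)" using that by (rule of_nat_mono)
    then have "real k \<le> real N * 2^n" by simp
    then show ?thesis unfolding tt_def by (simp add: divide_le_eq)
  qed
  have ttmono: "tt n j \<le> tt n k" if "j \<le> k" for n j k
    unfolding tt_def using that by (simp add: divide_right_mono)
  have kN: "tt n (\<kappa> n \<omega>) = N" if "N*2^n \<le> \<kappa> n \<omega>" for n \<omega>
  proof -
    have "\<kappa> n \<omega> = N*2^n" using that kL[of n \<omega>] by simp
    then show ?thesis unfolding tt_def by simp
  qed
  have EF: "{\<omega>\<in>space M. \<kappa> n \<omega> = k} \<in> sets (F (tt n k))" if kk: "k \<le> N*2^n" for n k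
  proof -
    define Q where "Q j = {\<omega>\<in>space M. N*2^n \<le> j \<or> b < \<xi> (tt n j) \<omega>}" for j
    have Qs: "Q j \<in> sets (F (tt n k))" if "j \<le> k" for j
    proof -
      have fm: "\<xi> (tt n j) \<in> borel_measurable (F (tt n k))"
        using adp2[OF tt0 ttmono[OF that]] .
      have S1: "{\<omega>\<in>space (F (tt n k)). N*2^n \<le> j \<or> b < \<xi> (tt n j) \<omega>} \<in> sets (F (tt n k))"
      proof (cases "N*2^n \<le> j")
        case True then show ?thesis by simp
      next
        case False
        have "\<xi> (tt n j) -` {b<..} \<inter> space (F (tt n k)) \<in> sets (F (tt n k))"
          by (rule measurable_sets[OF fm]) simp
        moreover have "{\<omega>\<in>space (F (tt n k)). N*2^n \<le> j \<or> b < \<xi> (tt n j) \<omega>} = \<xi> (tt n j) -` {b<..} \<inter> space (F (tt n k))"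
          using False by auto
        ultimately show ?thesis by simp
      qed
      have sp: "space (F (tt n k)) = space M" using spF[of "tt n k"] tt0[of n k] by blast
      show ?thesis unfolding Q_def using S1 unfolding sp .
    qed
    have "{\<omega>\<in>space M. \<kappa> n \<omega> = k} = Q k - (\<Union>j\<in>{..<k}. Q j)"
    proof (rule set_eqI)
      fix \<omega>
      have "\<kappa> n \<omega> = k \<longleftrightarrow> (N*2^n \<le> k \<or> b < \<xi> (tt n k) \<omega>) \<and> (\<forall>j<k. \<not> (N*2^n \<le> j \<or> b < \<xi> (tt n j) \<omega>))"
        unfolding \<kappa>_def by (rule least_eq_iff_nat[of _ "N*2^n"]) simp
      then show "\<omega> \<in> {\<omega>\<in>space M. \<kappa> n \<omega> = k} \<longleftrightarrow> \<omega> \<in> Q k - (\<Union>j\<in>{..<k}. Q j)"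
        unfolding Q_def by blast
    qed
    also have "\<dots> \<in> sets (F (tt n k))"
    proof (rule sets.Diff)
      show "Q k \<in> sets (F (tt n k))" using Qs by blast
      show "(\<Union>j\<in>{..<k}. Q j) \<in> sets (F (tt n k))"
        by (rule sets.finite_UN) (use Qs in auto)
    qed
    finally show ?thesis .
  qed
  have EM: "{\<omega>\<in>space M. \<kappa> n \<omega> = k} \<in> sets M" if "k \<le> N*2^n" for n k
    using EF[OF that] setsF[OF tt0] by auto
  have ind_sp: "(\<integral>\<omega>. f \<omega> * indicator (space M) \<omega> \<partial>M) = (\<integral>\<omega>. f \<omega> \<partial>M)" for f :: "'a \<Rightarrow> real"
    by (rule Bochner_Integration.integral_cong) auto
  have sp0: "space M \<in> sets (F 0)" using spF[of 0] sets.top[of "F 0"] by simp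
  have EN1: "(\<integral>\<omega>. \<xi> N \<omega> \<partial>M) = x"
  proof -
    have "(\<integral>\<omega>. \<xi> N \<omega> * indicator (space M) \<omega> \<partial>M) = (\<integral>\<omega>. \<xi> 0 \<omega> * indicator (space M) \<omega> \<partial>M)"
      using mp1[unfolded mprop_def, rule_format, of 0 "real N" "space M"] sp0 by simp
    also have "\<dots> = (\<integral>\<omega>. x \<partial>M)" by (rule Bochner_Integration.integral_cong) (use init in auto)
    finally show ?thesis using ind_sp by (simp add: prob_space)
  qed
  have EN2: "(\<integral>\<omega>. (\<xi> N \<omega>)\<^sup>2 - N \<partial>M) = x\<^sup>2"
  proof -
    have "(\<integral>\<omega>. ((\<xi> N \<omega>)\<^sup>2 - N) * indicator (space M) \<omega> \<partial>M) = (\<integral>\<omega>. ((\<xi> 0 \<omega>)\<^sup>2 - 0) * indicator (space M) \<omega> \<partial>M)"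
      using mp2[unfolded mprop_def, rule_format, of 0 "real N" "space M"] sp0 by simp
    also have "\<dots> = (\<integral>\<omega>. x\<^sup>2 \<partial>M)" by (rule Bochner_Integration.integral_cong) (use init in auto)
    finally show ?thesis using ind_sp[of "\<lambda>\<omega>. (\<xi> N \<omega>)\<^sup>2 - N"] by (simp add: prob_space)
  qed
  have iX: "integrable M (\<lambda>\<omega>. \<xi> (tt n (\<kappa> n \<omega>)) \<omega>)" for n
    by (rule stopped_integrable[of M "\<kappa> n" "N*2^n" "\<lambda>k. \<xi> (tt n k)"]) (use kL EM int1 tt0 in auto)
  have iX2: "integrable M (\<lambda>\<omega>. (\<xi> (tt n (\<kappa> n \<omega>)) \<omega>)\<^sup>2)" for n
    by (rule stopped_integrable[of M "\<kappa> n" "N*2^n" "\<lambda>k \<omega>. (\<xi> (tt n k) \<omega>)\<^sup>2"]) (use kL EM int2 tt0 in auto)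
  have iT: "integrable M (\<lambda>\<omega>. tt n (\<kappa> n \<omega>))" for n
    by (rule stopped_integrable[of M "\<kappa> n" "N*2^n" "\<lambda>k \<omega>. tt n k"]) (use kL EM in auto)
  have AM: "A n \<in> sets M" for n
  proof -
    have [measurable]: "(\<lambda>\<omega>. \<xi> (tt n (\<kappa> n \<omega>)) \<omega>) \<in> borel_measurable M" using iX by auto
    show ?thesis unfolding A_def by measurable
  qed
  have AF: "A n \<inter> {\<omega>\<in>space M. \<kappa> n \<omega> = k} \<in> sets (F (tt n k))" if kk: "k \<le> N*2^n" for n k
  proof -
    have [measurable]: "\<xi> (tt n k) \<in> borel_measurable (F (tt n k))" using adp tt0 by auto
    have "{\<omega>\<in>space (F (tt n k)). K + 1 < \<xi> (tt n k) \<omega>} \<in> sets (F (tt n k))" by measurable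
    then have "{\<omega>\<in>space M. \<kappa> n \<omega> = k} \<inter> {\<omega>\<in>space (F (tt n k)). K + 1 < \<xi> (tt n k) \<omega>} \<in> sets (F (tt n k))"
      using EF[OF kk] by auto
    moreover have "A n \<inter> {\<omega>\<in>space M. \<kappa> n \<omega> = k} = {\<omega>\<in>space M. \<kappa> n \<omega> = k} \<inter> {\<omega>\<in>space (F (tt n k)). K + 1 < \<xi> (tt n k) \<omega>}"
      unfolding A_def using spF[OF tt0] by auto
    ultimately show ?thesis by simp
  qed
  have ici: "integrable M (\<lambda>\<omega>. c * indicator S \<omega>)" if "S \<in> sets M" for S and c :: real
    using integrable_real_mult_indicator[OF that, of "\<lambda>_. c"] by simp
  have ici_int: "(\<integral>\<omega>. c * indicator S \<omega> \<partial>M) = c * measure M S" if "S \<in> sets M" for S and c :: real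
  proof -
    have "S \<inter> space M = S" using sets.sets_into_space[OF that] by blast
    then show ?thesis by simp
  qed
  have Asp: "A n \<inter> space M = A n" for n unfolding A_def by auto
  have ineq: "real N * p0 \<le> C + eps n" for n
  proof -
    define X where "X \<omega> = \<xi> (tt n (\<kappa> n \<omega>)) \<omega>" for \<omega>
    define Tt where "Tt \<omega> = tt n (\<kappa> n \<omega>)" for \<omega>
    have iX': "integrable M X" using iX unfolding X_def .
    have iX2': "integrable M (\<lambda>\<omega>. (X \<omega>)\<^sup>2)" using iX2 unfolding X_def .
    have iT': "integrable M Tt" using iT unfolding Tt_def .
    have XT: "m \<le> X \<omega>" if "\<omega> \<in> space M" for \<omega> using vals that tt0 mT unfolding X_def by blast
    have TtN: "Tt \<omega> \<le> N" "0 \<le> Tt \<omega>" for \<omega> unfolding Tt_def using ttN[OF kL] tt0 by auto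
    have [measurable]: "X \<in> borel_measurable M" using iX' by auto
    define Is where "Is = {\<omega>\<in>space M. X \<omega> \<le> b}"
    have Is[measurable]: "Is \<in> sets M" unfolding Is_def by measurable
    have a: "(\<integral>\<omega>. X \<omega> \<partial>M) = x"
    proof -
      have "(\<integral>\<omega>. \<xi> N \<omega> * indicator (space M) \<omega> \<partial>M) = (\<integral>\<omega>. \<xi> (tt n (\<kappa> n \<omega>)) \<omega> * indicator (space M) \<omega> \<partial>M)"
        by (rule OS[OF mp1, of "\<kappa> n" "N*2^n"]) (use kL tt0 ttN EF EM int1 in auto)
      then show ?thesis using EN1 ind_sp unfolding X_def by simp
    qed
    have bb: "(\<integral>\<omega>. (X \<omega>)\<^sup>2 - Tt \<omega> \<partial>M) = x\<^sup>2"
    proof -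
      have "(\<integral>\<omega>. ((\<xi> N \<omega>)\<^sup>2 - N) * indicator (space M) \<omega> \<partial>M) = (\<integral>\<omega>. ((\<xi> (tt n (\<kappa> n \<omega>)) \<omega>)\<^sup>2 - tt n (\<kappa> n \<omega>)) * indicator (space M) \<omega> \<partial>M)"
        by (rule OS[OF mp2, of "\<kappa> n" "N*2^n"]) (use kL tt0 ttN EF EM int2 in auto)
      then show ?thesis using EN2 ind_sp unfolding X_def Tt_def by simp
    qed
    have c: "(\<integral>\<omega>. ((X \<omega>)\<^sup>2 - Tt \<omega>) * indicator (A n) \<omega> \<partial>M) = (\<integral>\<omega>. ((\<xi> N \<omega>)\<^sup>2 - N) * indicator (A n) \<omega> \<partial>M)"
    proof -
      have "(\<integral>\<omega>. ((\<xi> N \<omega>)\<^sup>2 - N) * indicator (A n) \<omega> \<partial>M) = (\<integral>\<omega>. ((\<xi> (tt n (\<kappa> n \<omega>)) \<omega>)\<^sup>2 - tt n (\<kappa> n \<omega>)) * indicator (A n) \<omega> \<partial>M)"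
        by (rule OS[OF mp2, of "\<kappa> n" "N*2^n"]) (use kL tt0 ttN AF AM EM setsF int2 in auto)
      then show ?thesis unfolding X_def Tt_def by simp
    qed
    define q where "q = measure M Is"
    have d: "b - (b - m) * q \<le> x"
    proof -
      have "(\<integral>\<omega>. b - (b - m) * indicator Is \<omega> \<partial>M) \<le> (\<integral>\<omega>. X \<omega> \<partial>M)"
      proof (rule Bochner_Integration.integral_mono)
        show "integrable M (\<lambda>\<omega>. b - (b - m) * indicator Is \<omega>)"
          using ici[OF Is] by (intro Bochner_Integration.integrable_diff) auto
        show "integrable M X" by (rule iX')
        fix \<omega> assume w: "\<omega> \<in> space M"
        show "b - (b - m) * indicator Is \<omega> \<le> X \<omega>"
          using XT[OF w] w unfolding Is_def by (auto simp: indicator_def)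
      qed
      moreover have "(\<integral>\<omega>. b - (b - m) * indicator Is \<omega> \<partial>M) = b - (b - m) * q"
      proof -
        have "(\<integral>\<omega>. b - (b - m) * indicator Is \<omega> \<partial>M) = (\<integral>\<omega>. b \<partial>M) - (\<integral>\<omega>. (b - m) * indicator Is \<omega> \<partial>M)"
          by (rule Bochner_Integration.integral_diff) (use ici[OF Is] in auto)
        then show ?thesis unfolding q_def using ici_int[OF Is] by (simp add: prob_space)
      qed
      ultimately show ?thesis using a by simp
    qed
    have qge: "p0 \<le> q"
    proof -
      have "1 \<le> (b - m) * q" using d b_def by simp
      then show ?thesis unfolding p0_def using bm by (simp add: divide_le_eq mult.commute)
    qed
    have e: "real N * q \<le> (\<integral>\<omega>. Tt \<omega> \<partial>M)"
    proof -
      have "(\<integral>\<omega>. real N * indicator Is \<omega> \<partial>M) \<le> (\<integral>\<omega>. Tt \<omega> \<partial>M)"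
      proof (rule Bochner_Integration.integral_mono)
        show "integrable M (\<lambda>\<omega>. real N * indicator Is \<omega>)" using ici[OF Is] .
        show "integrable M Tt" by (rule iT')
        fix \<omega> assume w: "\<omega> \<in> space M"
        show "real N * indicator Is \<omega> \<le> Tt \<omega>"
        proof (cases "\<omega> \<in> Is")
          case True
          then have "\<not> b < X \<omega>" unfolding Is_def by auto
          then have "N*2^n \<le> \<kappa> n \<omega>" using kP[of n \<omega>] unfolding X_def by auto
          then show ?thesis using True kN unfolding Tt_def by simp
        qed (use TtN in simp)
      qed
      then show ?thesis unfolding q_def using ici_int[OF Is] by simp
    qed
    have f: "(\<integral>\<omega>. Tt \<omega> \<partial>M) \<le> (\<integral>\<omega>. (X \<omega>)\<^sup>2 \<partial>M)"
    proof -
      have "(\<integral>\<omega>. (X \<omega>)\<^sup>2 \<partial>M) - (\<integral>\<omega>. Tt \<omega> \<partial>M) = x\<^sup>2" using bb iX2' iT' by simp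
      then show ?thesis using zero_le_power2[of x] by linarith
    qed
    have g: "(\<integral>\<omega>. (X \<omega>)\<^sup>2 \<partial>M) \<le> C + eps n"
    proof -
      have iA: "integrable M (\<lambda>\<omega>. ((X \<omega>)\<^sup>2 - Tt \<omega>) * indicator (A n) \<omega>)"
        using iX2' iT' AM by (intro integrable_real_mult_indicator) auto
      have iNA: "integrable M (\<lambda>\<omega>. real N * indicator (A n) \<omega>)" using ici[OF AM] .
      have "(\<integral>\<omega>. (X \<omega>)\<^sup>2 \<partial>M) \<le> (\<integral>\<omega>. C + ((X \<omega>)\<^sup>2 - Tt \<omega>) * indicator (A n) \<omega> + real N * indicator (A n) \<omega> \<partial>M)"
      proof (rule Bochner_Integration.integral_mono)
        show "integrable M (\<lambda>\<omega>. (X \<omega>)\<^sup>2)" by (rule iX2')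
        show "integrable M (\<lambda>\<omega>. C + ((X \<omega>)\<^sup>2 - Tt \<omega>) * indicator (A n) \<omega> + real N * indicator (A n) \<omega>)"
          using iA iNA by simp
        fix \<omega> assume w: "\<omega> \<in> space M"
        have C0: "0 \<le> C" unfolding C_def using zero_le_power2[of m] by (simp add: le_max_iff_disj)
        show "(X \<omega>)\<^sup>2 \<le> C + ((X \<omega>)\<^sup>2 - Tt \<omega>) * indicator (A n) \<omega> + real N * indicator (A n) \<omega>"
        proof (cases "\<omega> \<in> A n")
          case True then show ?thesis using TtN[of \<omega>] C0 by simp
        next
          case False
          then have "X \<omega> \<le> K + 1" using w unfolding A_def X_def by auto
          then have "(X \<omega>)\<^sup>2 \<le> C" unfolding C_def using sq_bound XT[OF w] by blast
          then show ?thesis using False by simp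
        qed
      qed
      also have "\<dots> = C + (\<integral>\<omega>. ((X \<omega>)\<^sup>2 - Tt \<omega>) * indicator (A n) \<omega> \<partial>M) + real N * measure M (A n)"
        using iA iNA ici_int[OF AM] by (simp add: prob_space Asp)
      also have "(\<integral>\<omega>. ((X \<omega>)\<^sup>2 - Tt \<omega>) * indicator (A n) \<omega> \<partial>M) = eps n - real N * measure M (A n)"
      proof -
        have i1: "integrable M (\<lambda>\<omega>. (\<xi> N \<omega>)\<^sup>2 * indicator (A n) \<omega>)"
          using int2 AM by (intro integrable_real_mult_indicator) auto
        have "(\<integral>\<omega>. ((\<xi> N \<omega>)\<^sup>2 - N) * indicator (A n) \<omega> \<partial>M) = (\<integral>\<omega>. (\<xi> N \<omega>)\<^sup>2 * indicator (A n) \<omega> - real N * indicator (A n) \<omega> \<partial>M)"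
          by (simp add: left_diff_distrib)
        also have "\<dots> = eps n - real N * measure M (A n)"
          unfolding eps_def using i1 iNA ici_int[OF AM] by (simp add: Asp)
        finally show ?thesis using c by simp
      qed
      finally show ?thesis by simp
    qed
    have "real N * p0 \<le> real N * q" using qge by (simp add: mult_left_mono)
    then show ?thesis using e f g by linarith
  qed
  have lim: "eps \<longlonglongrightarrow> 0"
  proof -
    have "(\<lambda>n. \<integral>\<omega>. (\<xi> N \<omega>)\<^sup>2 * indicator (A n) \<omega> \<partial>M) \<longlonglongrightarrow> (\<integral>\<omega>. (0::real) \<partial>M)"
    proof (rule integral_dominated_convergence[where w="\<lambda>\<omega>. (\<xi> N \<omega>)\<^sup>2"])
      show "(\<lambda>\<omega>. 0::real) \<in> borel_measurable M" by simp
      show "(\<lambda>\<omega>. (\<xi> N \<omega>)\<^sup>2 * indicator (A n) \<omega>) \<in> borel_measurable M" for n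
        using int2 AM by (intro borel_measurable_integrable integrable_real_mult_indicator) auto
      show "integrable M (\<lambda>\<omega>. (\<xi> N \<omega>)\<^sup>2)" using int2 by auto
      show "AE \<omega> in M. norm ((\<xi> N \<omega>)\<^sup>2 * indicator (A n) \<omega>) \<le> (\<xi> N \<omega>)\<^sup>2" for n
        by (rule AE_I2) (auto simp: indicator_def)
      show "AE \<omega> in M. (\<lambda>n. (\<xi> N \<omega>)\<^sup>2 * indicator (A n) \<omega>) \<longlonglongrightarrow> 0"
      proof (rule AE_I2)
        fix \<omega> assume w: "\<omega> \<in> space M"
        have "\<exists>n0. \<forall>n\<ge>n0. (\<lambda>t. \<xi> t \<omega>) (real (LEAST k. N*2^n \<le> k \<or> b < (\<lambda>t. \<xi> t \<omega>) (real k / 2^n)) / 2^n) \<le> K + 1"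
          by (rule path_lemma[where x=x and T=T]) (use w init vals rc I Kb Kp b_def in auto)
        then obtain n0 where n0: "\<forall>n\<ge>n0. \<xi> (tt n (\<kappa> n \<omega>)) \<omega> \<le> K + 1"
          unfolding tt_def \<kappa>_def by auto
        have "eventually (\<lambda>n. (\<xi> N \<omega>)\<^sup>2 * indicator (A n) \<omega> = 0) sequentially"
          unfolding eventually_sequentially A_def
          by (rule exI[of _ n0]) (use n0 in \<open>auto simp: indicator_def not_less\<close>)
        then show "(\<lambda>n. (\<xi> N \<omega>)\<^sup>2 * indicator (A n) \<omega>) \<longlonglongrightarrow> 0" by (rule tendsto_eventually)
      qed
    qed
    then show ?thesis unfolding eps_def by simp
  qed
  then have "eventually (\<lambda>n. eps n < 1) sequentially" by (rule order_tendstoD) simp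
  then obtain n where "eps n < 1" by (auto simp: eventually_sequentially)
  then show False using ineq[of n] Np0 by simp
qed

lemma condI_neg:
  assumes "condition_I' T p"
  shows "condition_I' (uminus ` T) (\<lambda>t. - p t)"
  unfolding condition_I'_def
proof (intro ballI allI impI)
  fix x' y' z' r t
  assume x': "x' \<in> uminus ` T" and y': "y' \<in> uminus ` T" and z': "z' \<in> uminus ` T"
  assume h: "x' < y' \<and> y' < z' \<and> 0 \<le> r \<and> r < t \<and>
        ((- p r, - p t) = (x', z') \<or> (- p r, - p t) = (z', x'))"
  obtain a c d where a: "a \<in> T" "x' = - a" and c: "c \<in> T" "y' = - c" and d: "d \<in> T" "z' = - d"
    using x' y' z' by blast
  have "d < c \<and> c < a \<and> 0 \<le> r \<and> r < t \<and> ((p r, p t) = (d, a) \<or> (p r, p t) = (a, d))"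
    using h a c d by auto
  then have "\<exists>s\<in>{r..t}. p s = c" using assms d(1) c(1) a(1) unfolding condition_I'_def by blast
  then show "\<exists>s\<in>{r..t}. - p s = y'" using c by auto
qed

theorem mainTheorem4:
  fixes M :: "'a measure" and F :: "real \<Rightarrow> 'a measure"
    and T :: "real set" and x :: real and \<xi> :: "real \<Rightarrow> 'a \<Rightarrow> real"
  assumes "prob_space M"
    and "filtration_on M F"
    and "closed T" and "T \<noteq> {}" and "bdd_above T \<or> bdd_below T"
    and "x \<in> T"
  shows "\<not> ((\<forall>\<omega>\<in>space M. \<forall>t\<ge>0. \<xi> t \<omega> \<in> T) \<and>
            (\<forall>\<omega>\<in>space M. \<xi> 0 \<omega> = x) \<and>
            (\<forall>\<omega>\<in>space M. cadlag (\<lambda>t. \<xi> t \<omega>)) \<and>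
            (\<forall>\<omega>\<in>space M. condition_I' T (\<lambda>t. \<xi> t \<omega>)) \<and>
            martingale M F \<xi> \<and>
            martingale M F (\<lambda>t \<omega>. (\<xi> t \<omega>)\<^sup>2 - t))"
proof
  assume H: "(\<forall>\<omega>\<in>space M. \<forall>t\<ge>0. \<xi> t \<omega> \<in> T) \<and>
            (\<forall>\<omega>\<in>space M. \<xi> 0 \<omega> = x) \<and>
            (\<forall>\<omega>\<in>space M. cadlag (\<lambda>t. \<xi> t \<omega>)) \<and>
            (\<forall>\<omega>\<in>space M. condition_I' T (\<lambda>t. \<xi> t \<omega>)) \<and>
            martingale M F \<xi> \<and>
            martingale M F (\<lambda>t \<omega>. (\<xi> t \<omega>)\<^sup>2 - t)"
  have P: "prob_space M" and Fi: "filtration_on M F" using assms by auto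
  have vals: "\<forall>\<omega>\<in>space M. \<forall>t\<ge>0. \<xi> t \<omega> \<in> T" and init: "\<forall>\<omega>\<in>space M. \<xi> 0 \<omega> = x"
    and cad: "\<forall>\<omega>\<in>space M. cadlag (\<lambda>t. \<xi> t \<omega>)" and I: "\<forall>\<omega>\<in>space M. condition_I' T (\<lambda>t. \<xi> t \<omega>)"
    and m1: "martingale M F \<xi>" and m2: "martingale M F (\<lambda>t \<omega>. (\<xi> t \<omega>)\<^sup>2 - t)"
    using H by auto
  have mp1: "mprop M F \<xi>" by (rule mprop_of_martingale[OF P Fi m1])
  have mp2: "mprop M F (\<lambda>t \<omega>. (\<xi> t \<omega>)\<^sup>2 - t)" by (rule mprop_of_martingale[OF P Fi m2])
  have adp: "\<forall>t\<ge>0. \<xi> t \<in> borel_measurable (F t)" and int1: "\<forall>t\<ge>0. integrable M (\<xi> t)"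
    using m1 unfolding martingale_def by auto
  have int2: "\<forall>t\<ge>0. integrable M (\<lambda>\<omega>. (\<xi> t \<omega>)\<^sup>2)"
  proof (intro allI impI)
    fix t :: real assume "t \<ge> 0"
    then have "integrable M (\<lambda>\<omega>. (\<xi> t \<omega>)\<^sup>2 - t)" using m2 unfolding martingale_def by auto
    then have "integrable M (\<lambda>\<omega>. ((\<xi> t \<omega>)\<^sup>2 - t) + t)"
      using finite_measure.integrable_const[OF prob_space.finite_measure[OF P]] by (intro Bochner_Integration.integrable_add) auto
    then show "integrable M (\<lambda>\<omega>. (\<xi> t \<omega>)\<^sup>2)" by simp
  qed
  have rc: "\<forall>\<omega>\<in>space M. \<forall>t\<ge>0. continuous (at_right t) (\<lambda>t. \<xi> t \<omega>)"
    using cad unfolding cadlag_def by auto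
  show False
  proof (cases "bdd_below T")
    case True
    then obtain m where m: "\<forall>y\<in>T. m \<le> y" unfolding bdd_below_def by auto
    show False
      by (rule core[OF P Fi m \<open>x \<in> T\<close> vals init rc I adp int1 int2 mp1 mp2])
  next
    case False
    then have "bdd_above T" using assms by auto
    then obtain Mx where Mx: "\<forall>y\<in>T. y \<le> Mx" unfolding bdd_above_def by auto
    let ?\<eta> = "\<lambda>t \<omega>. - \<xi> t \<omega>"
    show False
    proof (rule core[OF P Fi, of "uminus ` T" "- Mx" "- x" ?\<eta>])
      show "\<forall>y\<in>uminus ` T. - Mx \<le> y" using Mx by auto
      show "- x \<in> uminus ` T" using \<open>x \<in> T\<close> by auto
      show "\<forall>\<omega>\<in>space M. \<forall>t\<ge>0. ?\<eta> t \<omega> \<in> uminus ` T" using vals by auto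
      show "\<forall>\<omega>\<in>space M. ?\<eta> 0 \<omega> = - x" using init by auto
      show "\<forall>\<omega>\<in>space M. \<forall>t\<ge>0. continuous (at_right t) (\<lambda>t. ?\<eta> t \<omega>)"
        using rc by (auto intro: continuous_minus)
      show "\<forall>\<omega>\<in>space M. condition_I' (uminus ` T) (\<lambda>t. ?\<eta> t \<omega>)"
        using I condI_neg by auto
      show "\<forall>t\<ge>0. ?\<eta> t \<in> borel_measurable (F t)" using adp by auto
      show "\<forall>t\<ge>0. integrable M (?\<eta> t)" using int1 by auto
      show "\<forall>t\<ge>0. integrable M (\<lambda>\<omega>. (?\<eta> t \<omega>)\<^sup>2)" using int2 by simp
      show "mprop M F ?\<eta>" using mp1 unfolding mprop_def by simp
      show "mprop M F (\<lambda>t \<omega>. (?\<eta> t \<omega>)\<^sup>2 - t)" using mp2 by simp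
    qed
  qed
qed

end
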